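(* Assume (A2), (A3) and (P1). Then there is a constant $c$, independent of $N$, such that for every data vector $y$ the (unique) solution $(X,U)$ of the quadratic program (QP) satisfies $$\|X\|_\omega\le c\|y\|_\infty\quad\text{and}\quad\|U\|_\omega\le c\|y\|_\infty,$$ where $\|X\|_\omega^2=|X_N|^2+\sum_{i=1}^N\omega_i|X_i|^2$, $\|U\|_\omega^2=\sum_{i=1}^N\omega_i|U_i|^2$, and $\|y\|_\infty$ is the maximum Euclidean norm of the blocks $y_{11},\dots,y_{1N},y_2,y_3,y_{41},\dots,y_{4,N-1},y_5,y_{61},\dots,y_{6N}$.
   Context: Radau collocation data: for an integer $N\ge 2$, let $-1<\tau_1<\dots<\tau_N=1$ and $\omega_1,\dots,\omega_N>0$ be the nodes and weights of the $N$-point Gauss–Radau quadrature rule on $[-1,1]$ with fixed node $+1$ ($\sum_i\omega_i=2$). Set $\tau_0=-1$. For $0\le j\le N$ let $L_j(\tau)=\prod_{i=0,i\ne j}^{N}\frac{\tau-\tau_i}{\tau_j-\tau_i}$ and let $D$ be the $N\times(N+1)$ matrix $D_{ij}=L_j'(\tau_i)$, $1\le i\le N$, $0\le j\le N$; $D_{1:N}$ is the submatrix of columns $1,\dots,N$. Matrix $\|\cdot\|_\infty$ is the largest absolute row sum; $|\cdot|$ is the Euclidean norm. (P1): $D_{1:N}$ is invertible and $\|D_{1:N}^{-1}\|_\infty\le2$. Problem data: $f:\mathbb{R}^n\times\mathbb{R}^m\to\mathbb{R}^n$, $C:\mathbb{R}^n\to\mathbb{R}$ twice continuously differentiable near the relevant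 points, $H(x,u,\lambda)=\lambda^{\mathsf T}f(x,u)$, and $(x^*,u^*,\lambda^* )$ a given continuous triple on $[-1,1]$. With $H$-derivatives evaluated at $(x^*(\tau_i),u^*(\tau_i),\lambda^*(\tau_i))$: $A_i=\nabla_xf(x^*(\tau_i),u^*(\tau_i))$, $B_i=\nabla_uf(x^*(\tau_i),u^*(\tau_i))$, $Q_i=\nabla_{xx}H$, $S_i=\nabla_{xu}H$, $R_i=\nabla_{uu}H$, $T=\nabla^2C(x^*(1))$. (A2): for some $\alpha>0$ the smallest eigenvalues of $\nabla^2C(x^*(1))$ and of $\nabla^2_{(x,u)}H(x^*(t),u^*(t),\lambda^*(t))$ exceed $\alpha$ uniformly in $t\in[-1,1]$. (A3): $\|\nabla_xf(x^*(t),u^*(t))\|_\infty\le1/4$ and $\|\nabla_xf(x^*(t),u^*(t))^{\mathsf T}\|_\infty\le1/4$ for all $t$. Data $y$: $y_{1i}\in\mathbb{R}^n$ ($1\le i\le N$), $y_2,y_3,y_5\in\mathbb{R}^n$, $y_{4i}\in\mathbb{R}^n$ ($1\le i<N$), $y_{6i}\in\mathbb{R}^m$ ($1\le i\le N$); set $y_{4N}:=y_5$. (QP): minimize over $X=(X_0,\dots,X_N)$, $U=(U_1,\dots,U_N)$ the function $\tfrac12\mathcal{Q}(X,U)+\mathcal{L}(X,U)$ subject to $\sum_{j=0}^ND_{ij}X_j=A_iX_i+B_iU_i+y_{1i}$ ($1\le i\le N$), $X_0=y_2$, where $\mathcal{Q}(X,U)=X_N^{\mathsf T}TX_N+\sum_{i=1}^N\omega_i(X_i^{\mathsf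 T}Q_iX_i+2X_i^{\mathsf T}S_iU_i+U_i^{\mathsf T}R_iU_i)$ and $\mathcal{L}(X,U)=X_0^{\mathsf T}\big(y_3+\sum_{i=1}^N\omega_iy_{4i}\big)-\sum_{i=1}^N\omega_i(y_{4i}^{\mathsf T}X_i+y_{6i}^{\mathsf T}U_i)$. *)

theory Defs
  imports "HOL-Analysis.Analysis" "HOL-Computational_Algebra.Polynomial"
begin

section \<open>Gauss--Radau collocation data\<close>

text \<open>tau 0 = -1 is the convention tau_0 = -1; tau 1 .. tau N are the N Gauss--Radau
  nodes with fixed node +1 and omega 1 .. omega N the weights.  The N-point
  Gauss--Radau rule with fixed node +1 is characterised as the (unique) N-point rule
  with nodes -1 < tau_1 < ... < tau_N = 1 that is exact for all polynomials of
  degree at most 2N-2.\<close>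
definition gauss_radau :: "nat \<Rightarrow> (nat \<Rightarrow> real) \<Rightarrow> (nat \<Rightarrow> real) \<Rightarrow> bool" where
  "gauss_radau N tau omega \<longleftrightarrow>
     tau 0 = -1 \<and> -1 < tau 1 \<and> tau N = 1 \<and>
     (\<forall>i\<in>{1..<N}. tau i < tau (Suc i)) \<and>
     (\<forall>i\<in>{1..N}. 0 < omega i) \<and>
     (\<forall>p :: real poly. degree p \<le> 2 * N - 2 \<longrightarrow>
        (\<Sum>i=1..N. omega i * poly p (tau i)) = integral {-1..1} (poly p))"

definition lagrange_basis :: "nat \<Rightarrow> (nat \<Rightarrow> real) \<Rightarrow> nat \<Rightarrow> real \<Rightarrow> real" where
  "lagrange_basis N tau j t = (\<Prod>i\<in>{0..N} - {j}. (t - tau i) / (tau j - tau i))"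

text \<open>D i j = L_j'(tau_i), 1 <= i <= N, 0 <= j <= N.\<close>
definition radau_D :: "nat \<Rightarrow> (nat \<Rightarrow> real) \<Rightarrow> nat \<Rightarrow> nat \<Rightarrow> real" where
  "radau_D N tau i j = deriv (lagrange_basis N tau j) (tau i)"

text \<open>(P1): the N x N submatrix D_{1:N} (columns 1..N) is invertible and its inverse
  has infinity norm (largest absolute row sum) at most 2.\<close>
definition radau_P1 :: "nat \<Rightarrow> (nat \<Rightarrow> real) \<Rightarrow> bool" where
  "radau_P1 N tau \<longleftrightarrow>
     (\<exists>M :: nat \<Rightarrow> nat \<Rightarrow> real.
        (\<forall>i\<in>{1..N}. \<forall>k\<in>{1..N}.
            (\<Sum>j=1..N. radau_D N tau i j * M j k) = (if i = k then 1 else 0)) \<and>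
        (\<forall>i\<in>{1..N}. \<forall>k\<in>{1..N}.
            (\<Sum>j=1..N. M i j * radau_D N tau j k) = (if i = k then 1 else 0)) \<and>
        (\<forall>i\<in>{1..N}. (\<Sum>j=1..N. \<bar>M i j\<bar>) \<le> 2))"

section \<open>Matrix and calculus notions\<close>

definition mat_norm_inf :: "real^'n^'m \<Rightarrow> real" where
  "mat_norm_inf M = Max (range (\<lambda>i. \<Sum>j\<in>UNIV. \<bar>M $ i $ j\<bar>))"

definition mat_eigenvalue :: "real^'n^'n \<Rightarrow> real \<Rightarrow> bool" where
  "mat_eigenvalue M k \<longleftrightarrow> (\<exists>v. v \<noteq> 0 \<and> M *v v = k *\<^sub>R v)"

definition partial_at :: "(real^'n \<Rightarrow> real) \<Rightarrow> real^'n \<Rightarrow> 'n \<Rightarrow> real" where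
  "partial_at g z i = deriv (\<lambda>s. g (z + s *\<^sub>R axis i 1)) 0"

text \<open>Hessian matrix: entry (i,j) is the second partial derivative d_i d_j g.\<close>
definition hess_mat :: "(real^'n \<Rightarrow> real) \<Rightarrow> real^'n \<Rightarrow> real^'n^'n" where
  "hess_mat g z = (\<chi> i j. partial_at (\<lambda>w. partial_at g w j) z i)"

text \<open>Twice continuously differentiable on an open set G (Frechet derivatives).\<close>
definition C2_on :: "'a::euclidean_space set \<Rightarrow> ('a \<Rightarrow> 'b::euclidean_space) \<Rightarrow> bool" where
  "C2_on G g \<longleftrightarrow> open G \<and>
     (\<exists>g' :: 'a \<Rightarrow> 'a \<Rightarrow>\<^sub>L 'b. \<exists>g'' :: 'a \<Rightarrow> 'a \<Rightarrow>\<^sub>L ('a \<Rightarrow>\<^sub>L 'b).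
        (\<forall>z\<in>G. (g has_derivative blinfun_apply (g' z)) (at z)) \<and>
        (\<forall>z\<in>G. (g' has_derivative blinfun_apply (g'' z)) (at z)) \<and>
        continuous_on G g'')"

section \<open>(x,u) space as real^('n + 'm)\<close>

definition xpart :: "real^('n::finite + 'm::finite) \<Rightarrow> real^'n" where
  "xpart z = (\<chi> i. z $ Inl i)"

definition upart :: "real^('n::finite + 'm::finite) \<Rightarrow> real^'m" where
  "upart z = (\<chi> j. z $ Inr j)"

definition joinxu :: "real^'n::finite \<Rightarrow> real^'m::finite \<Rightarrow> real^('n + 'm)" where
  "joinxu x u = (\<chi> k. case k of Inl i \<Rightarrow> x $ i | Inr j \<Rightarrow> u $ j)"

section \<open>Linearisation along (x*, u*, lambda*)\<close>

definition Amat :: "(real^'n \<Rightarrow> real^'m \<Rightarrow> real^'n) \<Rightarrow> (real \<Rightarrow> real^'n) \<Rightarrow> (real \<Rightarrow> real^'m)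
    \<Rightarrow> real \<Rightarrow> real^'n^'n" where
  "Amat f xs us t = jacobian (\<lambda>x. f x (us t)) (at (xs t))"

definition Bmat :: "(real^'n \<Rightarrow> real^'m \<Rightarrow> real^'n) \<Rightarrow> (real \<Rightarrow> real^'n) \<Rightarrow> (real \<Rightarrow> real^'m)
    \<Rightarrow> real \<Rightarrow> real^'m^'n" where
  "Bmat f xs us t = jacobian (\<lambda>u. f (xs t) u) (at (us t))"

text \<open>Hessian of H(x,u,lambda) = lambda^T f(x,u) with respect to (x,u).\<close>
definition HessH :: "(real^'n \<Rightarrow> real^'m \<Rightarrow> real^'n) \<Rightarrow> (real \<Rightarrow> real^'n) \<Rightarrow> (real \<Rightarrow> real^'m)
    \<Rightarrow> (real \<Rightarrow> real^'n) \<Rightarrow> real \<Rightarrow> real^('n + 'm)^('n + 'm)" where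
  "HessH f xs us ls t =
     hess_mat (\<lambda>z. ls t \<bullet> f (xpart z) (upart z)) (joinxu (xs t) (us t))"

definition Qmat where "Qmat f xs us ls t = (\<chi> i j. HessH f xs us ls t $ Inl i $ Inl j)"
definition Smat where "Smat f xs us ls t = (\<chi> i j. HessH f xs us ls t $ Inl i $ Inr j)"
definition Rmat where "Rmat f xs us ls t = (\<chi> i j. HessH f xs us ls t $ Inr i $ Inr j)"

section \<open>The quadratic program (QP)\<close>

definition qp_feasible ::
  "(real^'n \<Rightarrow> real^'m \<Rightarrow> real^'n) \<Rightarrow> (real \<Rightarrow> real^'n) \<Rightarrow> (real \<Rightarrow> real^'m)
   \<Rightarrow> nat \<Rightarrow> (nat \<Rightarrow> real)
   \<Rightarrow> (nat \<Rightarrow> real^'n) \<Rightarrow> real^'n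
   \<Rightarrow> (nat \<Rightarrow> real^'n) \<Rightarrow> (nat \<Rightarrow> real^'m) \<Rightarrow> bool" where
  "qp_feasible f xs us N tau y1 y2 X U \<longleftrightarrow>
     (\<forall>i\<in>{1..N}. (\<Sum>j=0..N. radau_D N tau i j *\<^sub>R X j)
         = Amat f xs us (tau i) *v X i + Bmat f xs us (tau i) *v U i + y1 i) \<and>
     X 0 = y2"

text \<open>y4ext N y4 y5 i is y_{4i} for i < N and y_{4N} := y_5.\<close>
definition y4ext :: "nat \<Rightarrow> (nat \<Rightarrow> real^'n) \<Rightarrow> real^'n \<Rightarrow> nat \<Rightarrow> real^'n" where
  "y4ext N y4 y5 i = (if i = N then y5 else y4 i)"

definition qp_cost ::
  "(real^'n \<Rightarrow> real^'m \<Rightarrow> real^'n) \<Rightarrow> (real^'n \<Rightarrow> real)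
   \<Rightarrow> (real \<Rightarrow> real^'n) \<Rightarrow> (real \<Rightarrow> real^'m) \<Rightarrow> (real \<Rightarrow> real^'n)
   \<Rightarrow> nat \<Rightarrow> (nat \<Rightarrow> real) \<Rightarrow> (nat \<Rightarrow> real)
   \<Rightarrow> real^'n \<Rightarrow> (nat \<Rightarrow> real^'n) \<Rightarrow> real^'n \<Rightarrow> (nat \<Rightarrow> real^'m)
   \<Rightarrow> (nat \<Rightarrow> real^'n) \<Rightarrow> (nat \<Rightarrow> real^'m) \<Rightarrow> real" where
  "qp_cost f C xs us ls N tau omega y3 y4 y5 y6 X U =
     (let T = hess_mat C (xs 1);
          Qf = X N \<bullet> (T *v X N)
             + (\<Sum>i=1..N. omega i *
                 (X i \<bullet> (Qmat f xs us ls (tau i) *v X i)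
                  + 2 * (X i \<bullet> (Smat f xs us ls (tau i) *v U i))
                  + U i \<bullet> (Rmat f xs us ls (tau i) *v U i)));
          Lf = X 0 \<bullet> (y3 + (\<Sum>i=1..N. omega i *\<^sub>R y4ext N y4 y5 i))
             - (\<Sum>i=1..N. omega i * (y4ext N y4 y5 i \<bullet> X i + y6 i \<bullet> U i))
      in Qf / 2 + Lf)"

definition qp_solution ::
  "(real^'n \<Rightarrow> real^'m \<Rightarrow> real^'n) \<Rightarrow> (real^'n \<Rightarrow> real)
   \<Rightarrow> (real \<Rightarrow> real^'n) \<Rightarrow> (real \<Rightarrow> real^'m) \<Rightarrow> (real \<Rightarrow> real^'n)
   \<Rightarrow> nat \<Rightarrow> (nat \<Rightarrow> real) \<Rightarrow> (nat \<Rightarrow> real)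
   \<Rightarrow> (nat \<Rightarrow> real^'n) \<Rightarrow> real^'n \<Rightarrow> real^'n \<Rightarrow> (nat \<Rightarrow> real^'n) \<Rightarrow> real^'n
   \<Rightarrow> (nat \<Rightarrow> real^'m)
   \<Rightarrow> (nat \<Rightarrow> real^'n) \<Rightarrow> (nat \<Rightarrow> real^'m) \<Rightarrow> bool" where
  "qp_solution f C xs us ls N tau omega y1 y2 y3 y4 y5 y6 X U \<longleftrightarrow>
     qp_feasible f xs us N tau y1 y2 X U \<and>
     (\<forall>X' U'. qp_feasible f xs us N tau y1 y2 X' U' \<longrightarrow>
        qp_cost f C xs us ls N tau omega y3 y4 y5 y6 X U
          \<le> qp_cost f C xs us ls N tau omega y3 y4 y5 y6 X' U')"

section \<open>Norms\<close>

definition normX_omega :: "nat \<Rightarrow> (nat \<Rightarrow> real) \<Rightarrow> (nat \<Rightarrow> real^'n) \<Rightarrow> real" where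
  "normX_omega N omega X = sqrt ((norm (X N))\<^sup>2 + (\<Sum>i=1..N. omega i * (norm (X i))\<^sup>2))"

definition normU_omega :: "nat \<Rightarrow> (nat \<Rightarrow> real) \<Rightarrow> (nat \<Rightarrow> real^'m) \<Rightarrow> real" where
  "normU_omega N omega U = sqrt (\<Sum>i=1..N. omega i * (norm (U i))\<^sup>2)"

definition data_norm ::
  "nat \<Rightarrow> (nat \<Rightarrow> real^'n) \<Rightarrow> real^'n \<Rightarrow> real^'n \<Rightarrow> (nat \<Rightarrow> real^'n) \<Rightarrow> real^'n
   \<Rightarrow> (nat \<Rightarrow> real^'m) \<Rightarrow> real" where
  "data_norm N y1 y2 y3 y4 y5 y6 =
     Max ((\<lambda>i. norm (y1 i)) ` {1..N} \<union> {norm y2, norm y3, norm y5}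
          \<union> (\<lambda>i. norm (y4 i)) ` {1..<N} \<union> (\<lambda>i. norm (y6 i)) ` {1..N})"

end

theory Submission
  imports Defs
begin


definition lpoly :: "nat \<Rightarrow> (nat \<Rightarrow> real) \<Rightarrow> nat \<Rightarrow> real poly" where
  "lpoly N tau j = (\<Prod>i\<in>{0..N} - {j}. smult (1/(tau j - tau i)) [:-tau i, 1:])"

lemma lagrange_poly: "lagrange_basis N tau j = poly (lpoly N tau j)"
  unfolding lagrange_basis_def lpoly_def fun_eq_iff poly_prod
  by (intro allI prod.cong) (simp_all add: diff_divide_distrib)

lemma degree_lpoly: "degree (lpoly N tau j) \<le> N" if "j \<le> N"
proof -
  have "degree (lpoly N tau j) \<le> (\<Sum>i\<in>{0..N} - {j}. degree (smult (1/(tau j - tau i)) [:-tau i, 1:]))"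
    unfolding lpoly_def using degree_prod_sum_le[of "{0..N} - {j}" "\<lambda>i. smult (1/(tau j - tau i)) [:-tau i, 1:]"] by (simp only: o_def finite_Diff finite_atLeastAtMost)
  also have "\<dots> \<le> (\<Sum>i\<in>{0..N} - {j}. 1)"
    by (intro sum_mono) (simp add: degree_smult_le order_trans[OF degree_smult_le])
  also have "\<dots> \<le> N" using that by (simp add: card_Diff_singleton)
  finally show ?thesis .
qed

lemma lagrange_node:
  assumes inj: "inj_on tau {0..N}" and j: "j \<le> N" and k: "k \<le> N"
  shows "lagrange_basis N tau j (tau k) = (if j = k then 1 else 0)"
proof (cases "j = k")
  case True
  have "\<And>i. i \<in> {0..N} - {j} \<Longrightarrow> tau j \<noteq> tau i"
    using inj j by (auto dest: inj_onD)
  then show ?thesis using True by (auto simp: lagrange_basis_def intro!: prod.neutral)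
next
  case False
  have "k \<in> {0..N} - {j}" using False k by auto
  then show ?thesis using False by (auto simp: lagrange_basis_def intro!: prod_zero bexI[of _ k])
qed

lemma lpoly_sum:
  assumes inj: "inj_on tau {0..N}"
  shows "(\<Sum>j=0..N. lpoly N tau j) = 1"
proof (rule poly_eqI_degree[where A = "tau ` {0..N}"])
  fix x assume "x \<in> tau ` {0..N}"
  then obtain k where k: "k \<le> N" "x = tau k" by auto
  have "poly (\<Sum>j=0..N. lpoly N tau j) x = (\<Sum>j=0..N. lagrange_basis N tau j (tau k))"
    by (simp add: poly_sum lagrange_poly k)
  also have "\<dots> = (\<Sum>j=0..N. (if j = k then 1 else 0))"
    using inj k by (intro sum.cong) (auto simp: lagrange_node)
  also have "\<dots> = 1" using k by simp
  finally show "poly (\<Sum>j=0..N. lpoly N tau j) x = poly 1 x" by simp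
next
  have c: "card (tau ` {0..N}) = Suc N" using inj by (simp add: card_image)
  have "degree (\<Sum>j=0..N. lpoly N tau j) \<le> N"
    by (intro degree_sum_le) (auto intro: degree_lpoly)
  then show "degree (\<Sum>j=0..N. lpoly N tau j) < card (tau ` {0..N})" using c by simp
  show "degree (1::real poly) < card (tau ` {0..N})" using c by simp
qed

lemma radau_D_poly: "radau_D N tau i j = poly (pderiv (lpoly N tau j)) (tau i)"
  unfolding radau_D_def lagrange_poly by (rule DERIV_imp_deriv) (rule poly_DERIV)

lemma D_rowsum:
  assumes inj: "inj_on tau {0..N}"
  shows "(\<Sum>j=0..N. radau_D N tau i j) = 0"
proof -
  have "(\<Sum>j=0..N. radau_D N tau i j) = poly (pderiv (\<Sum>j=0..N. lpoly N tau j)) (tau i)"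
    using higher_pderiv_sum[of 1 "lpoly N tau" "{0..N}"] by (simp add: radau_D_poly poly_sum)
  also have "\<dots> = 0" using lpoly_sum[OF inj] by simp
  finally show ?thesis .
qed



lemma line_deriv:
  fixes g :: "'a::real_normed_vector \<Rightarrow> real"
  assumes "(g has_derivative G) (at (p + u *\<^sub>R v))"
  shows "((\<lambda>u. g (p + u *\<^sub>R v)) has_field_derivative G v) (at u)"
proof -
  have l: "linear G" using assms has_derivative_linear by blast
  have "((\<lambda>u. p + u *\<^sub>R v) has_derivative (\<lambda>s. s *\<^sub>R v)) (at u)"
    by (auto intro!: derivative_eq_intros)
  from has_derivative_compose[OF this assms]
  have "((\<lambda>u. g (p + u *\<^sub>R v)) has_derivative (\<lambda>s. G (s *\<^sub>R v))) (at u)" .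
  moreover have "(\<lambda>s. G (s *\<^sub>R v)) = (*) (G v)"
    using linear_scale[OF l] by (auto simp: fun_eq_iff)
  ultimately show ?thesis by (simp add: has_field_derivative_def)
qed

lemma partial_at_eq:
  fixes g :: "real^'k \<Rightarrow> real"
  assumes "(g has_derivative G) (at w)"
  shows "partial_at g w j = G (axis j 1)"
  unfolding partial_at_def
  by (rule DERIV_imp_deriv, rule line_deriv) (use assms in simp)

lemma hess_entry:
  fixes g :: "real^'k \<Rightarrow> real"
  assumes S: "open S" "z \<in> S"
    and d1: "\<And>w. w \<in> S \<Longrightarrow> (g has_derivative g1 w) (at w)"
    and d2: "((\<lambda>w. g1 w (axis j 1)) has_derivative G2) (at z)"
  shows "hess_mat g z $ i $ j = G2 (axis i 1)"
proof -
  let ?e = "axis i 1 :: real^'k"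
  define S' where "S' = (\<lambda>s. z + s *\<^sub>R ?e) -` S"
  have oS': "open S'" unfolding S'_def
    by (rule continuous_open_vimage[OF S(1)]) (intro continuous_intros)
  have "0 \<in> S'" using S by (simp add: S'_def)
  have "((\<lambda>s. g1 (z + s *\<^sub>R ?e) (axis j 1)) has_field_derivative G2 ?e) (at 0)"
    by (rule line_deriv) (use d2 in simp)
  then have "((\<lambda>s. partial_at g (z + s *\<^sub>R ?e) j) has_field_derivative G2 ?e) (at 0)"
    by (rule has_field_derivative_transform_within_open[OF _ oS' \<open>0 \<in> S'\<close>])
       (auto simp: S'_def intro!: partial_at_eq[symmetric] d1)
  then have "deriv (\<lambda>s. partial_at g (z + s *\<^sub>R ?e) j) 0 = G2 ?e"
    by (rule DERIV_imp_deriv)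
  then show ?thesis
    unfolding hess_mat_def by (simp add: partial_at_def[of "\<lambda>w. partial_at g w j"])
qed

lemma mvt_claim:
  fixes g :: "'a::real_normed_vector \<Rightarrow> real"
  assumes s: "s > 0"
    and inS: "\<And>u v. 0 \<le> u \<Longrightarrow> u \<le> s \<Longrightarrow> 0 \<le> v \<Longrightarrow> v \<le> s \<Longrightarrow> z + u *\<^sub>R a + v *\<^sub>R b \<in> S"
    and d1: "\<And>w. w \<in> S \<Longrightarrow> (g has_derivative g1 w) (at w)"
    and d2: "\<And>w h. w \<in> S \<Longrightarrow> ((\<lambda>w. g1 w h) has_derivative (\<lambda>k. g2 w k h)) (at w)"
  shows "\<exists>\<xi> \<eta>. 0 < \<xi> \<and> \<xi> < s \<and> 0 < \<eta> \<and> \<eta> < s \<and>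
     g (z + s *\<^sub>R a + s *\<^sub>R b) - g (z + s *\<^sub>R a) - g (z + s *\<^sub>R b) + g z
       = s\<^sup>2 * g2 (z + \<xi> *\<^sub>R a + \<eta> *\<^sub>R b) b a"
proof -
  define \<psi> where "\<psi> u = g ((z + s *\<^sub>R b) + u *\<^sub>R a) - g (z + u *\<^sub>R a)" for u
  have "\<exists>\<xi>>0. \<xi> < s \<and> \<psi> s - \<psi> 0 = (s - 0) * (g1 ((z + s *\<^sub>R b) + \<xi> *\<^sub>R a) a - g1 (z + \<xi> *\<^sub>R a) a)"
  proof (rule MVT2[OF s])
    fix u assume u: "0 \<le> u" "u \<le> s"
    have m1: "(z + s *\<^sub>R b) + u *\<^sub>R a \<in> S" using inS[of u s] u s by (simp add: algebra_simps)
    have m2: "z + u *\<^sub>R a \<in> S" using inS[of u 0] u s by simp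
    show "(\<psi> has_real_derivative (g1 ((z + s *\<^sub>R b) + u *\<^sub>R a) a - g1 (z + u *\<^sub>R a) a)) (at u)"
      unfolding \<psi>_def
      by (intro DERIV_diff line_deriv) (use d1 m1 m2 in auto)
  qed
  then obtain \<xi> where xi: "0 < \<xi>" "\<xi> < s"
    and e1: "\<psi> s - \<psi> 0 = s * (g1 ((z + \<xi> *\<^sub>R a) + s *\<^sub>R b) a - g1 ((z + \<xi> *\<^sub>R a) + 0 *\<^sub>R b) a)"
    by (auto simp: algebra_simps)
  have "\<exists>\<eta>>0. \<eta> < s \<and> g1 ((z + \<xi> *\<^sub>R a) + s *\<^sub>R b) a - g1 ((z + \<xi> *\<^sub>R a) + 0 *\<^sub>R b) a
      = (s - 0) * g2 ((z + \<xi> *\<^sub>R a) + \<eta> *\<^sub>R b) b a"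
  proof (rule MVT2[OF s])
    fix v assume v: "0 \<le> v" "v \<le> s"
    have m: "(z + \<xi> *\<^sub>R a) + v *\<^sub>R b \<in> S" using inS[of \<xi> v] v xi by simp
    show "((\<lambda>v. g1 ((z + \<xi> *\<^sub>R a) + v *\<^sub>R b) a) has_real_derivative g2 ((z + \<xi> *\<^sub>R a) + v *\<^sub>R b) b a) (at v)"
      by (rule line_deriv) (use d2[OF m] in simp)
  qed
  then obtain \<eta> where eta: "0 < \<eta>" "\<eta> < s"
    and e2: "g1 ((z + \<xi> *\<^sub>R a) + s *\<^sub>R b) a - g1 ((z + \<xi> *\<^sub>R a) + 0 *\<^sub>R b) a
      = s * g2 ((z + \<xi> *\<^sub>R a) + \<eta> *\<^sub>R b) b a" by auto
  have "g (z + s *\<^sub>R a + s *\<^sub>R b) - g (z + s *\<^sub>R a) - g (z + s *\<^sub>R b) + g z = \<psi> s - \<psi> 0"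
    by (simp add: \<psi>_def algebra_simps)
  also have "\<dots> = s\<^sup>2 * g2 (z + \<xi> *\<^sub>R a + \<eta> *\<^sub>R b) b a"
    using e1 e2 by (simp add: power2_eq_square)
  finally show ?thesis using xi eta by blast
qed

lemma schwarz:
  fixes g :: "'a::real_normed_vector \<Rightarrow> real"
  assumes S: "open S" "z \<in> S"
    and d1: "\<And>w. w \<in> S \<Longrightarrow> (g has_derivative g1 w) (at w)"
    and d2: "\<And>w h. w \<in> S \<Longrightarrow> ((\<lambda>w. g1 w h) has_derivative (\<lambda>k. g2 w k h)) (at w)"
    and c: "\<And>a b. isCont (\<lambda>w. g2 w a b) z"
  shows "g2 z a b = g2 z b a"
proof (rule ccontr)
  assume ne: "g2 z a b \<noteq> g2 z b a"
  define e where "e = \<bar>g2 z a b - g2 z b a\<bar> / 2"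
  have e: "e > 0" using ne by (simp add: e_def)
  obtain d1' where d1': "d1' > 0" "\<And>w. dist w z < d1' \<Longrightarrow> dist (g2 w a b) (g2 z a b) < e"
    using c[of a b] e unfolding continuous_at_eps_delta by blast
  obtain d2' where d2': "d2' > 0" "\<And>w. dist w z < d2' \<Longrightarrow> dist (g2 w b a) (g2 z b a) < e"
    using c[of b a] e unfolding continuous_at_eps_delta by blast
  obtain d3 where d3: "d3 > 0" "ball z d3 \<subseteq> S" using S openE by blast
  define d where "d = min d1' (min d2' d3)"
  have d: "d > 0" using d1' d2' d3 by (simp add: d_def)
  define s where "s = d / (2 * (norm a + norm b + 1))"
  have pos: "0 < 2 * (norm a + norm b + 1)" by (simp add: add_nonneg_pos)
  have s: "s > 0" using d pos by (simp add: s_def)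
  have sd: "s * (norm a + norm b) < d"
  proof -
    have "s * (norm a + norm b) \<le> s * (2 * (norm a + norm b + 1)) / 2" using s by simp
    also have "\<dots> = d / 2" using pos by (simp add: s_def)
    finally show ?thesis using d by simp
  qed
  have close: "dist (z + u *\<^sub>R a + v *\<^sub>R b) z < d \<and> dist (z + u *\<^sub>R b + v *\<^sub>R a) z < d"
    if uv: "0 \<le> u" "u \<le> s" "0 \<le> v" "v \<le> s" for u v
  proof -
    have "norm (u *\<^sub>R a + v *\<^sub>R b) \<le> u * norm a + v * norm b"
      using norm_triangle_ineq[of "u *\<^sub>R a" "v *\<^sub>R b"] uv by simp
    also have "\<dots> \<le> s * norm a + s * norm b"
      by (intro add_mono mult_right_mono) (use uv in auto)
    finally have 1: "norm (u *\<^sub>R a + v *\<^sub>R b) < d" using sd by (simp add: algebra_simps)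
    have "norm (u *\<^sub>R b + v *\<^sub>R a) \<le> u * norm b + v * norm a"
      using norm_triangle_ineq[of "u *\<^sub>R b" "v *\<^sub>R a"] uv by simp
    also have "\<dots> \<le> s * norm b + s * norm a"
      by (intro add_mono mult_right_mono) (use uv in auto)
    finally have 2: "norm (u *\<^sub>R b + v *\<^sub>R a) < d" using sd by (simp add: algebra_simps)
    show ?thesis using 1 2 by (simp add: dist_norm add.assoc)
  qed
  have inS: "z + u *\<^sub>R a + v *\<^sub>R b \<in> S" "z + u *\<^sub>R b + v *\<^sub>R a \<in> S"
    if "0 \<le> u" "u \<le> s" "0 \<le> v" "v \<le> s" for u v
    using close[OF that] d3 by (auto simp: d_def dist_commute subset_iff)
  obtain \<xi> \<eta> where xe: "0 < \<xi>" "\<xi> < s" "0 < \<eta>" "\<eta> < s"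
    and E1: "g (z + s *\<^sub>R a + s *\<^sub>R b) - g (z + s *\<^sub>R a) - g (z + s *\<^sub>R b) + g z
       = s\<^sup>2 * g2 (z + \<xi> *\<^sub>R a + \<eta> *\<^sub>R b) b a"
    using mvt_claim[OF s inS(1) d1 d2] by blast
  obtain \<xi>' \<eta>' where xe': "0 < \<xi>'" "\<xi>' < s" "0 < \<eta>'" "\<eta>' < s"
    and E2: "g (z + s *\<^sub>R b + s *\<^sub>R a) - g (z + s *\<^sub>R b) - g (z + s *\<^sub>R a) + g z
       = s\<^sup>2 * g2 (z + \<xi>' *\<^sub>R b + \<eta>' *\<^sub>R a) a b"
    using mvt_claim[OF s inS(2) d1 d2] by blast
  have eq: "g2 (z + \<xi> *\<^sub>R a + \<eta> *\<^sub>R b) b a = g2 (z + \<xi>' *\<^sub>R b + \<eta>' *\<^sub>R a) a b"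
    using E1 E2 s by (simp add: algebra_simps)
  have "dist (z + \<xi> *\<^sub>R a + \<eta> *\<^sub>R b) z < d2'"
    using close[of \<xi> \<eta>] xe by (simp add: d_def)
  then have 1: "\<bar>g2 (z + \<xi> *\<^sub>R a + \<eta> *\<^sub>R b) b a - g2 z b a\<bar> < e"
    using d2' by (simp add: dist_real_def)
  have "dist (z + \<xi>' *\<^sub>R b + \<eta>' *\<^sub>R a) z < d1'"
    using close[of \<xi>' \<eta>'] xe' by (simp add: d_def)
  then have 2: "\<bar>g2 (z + \<xi>' *\<^sub>R b + \<eta>' *\<^sub>R a) a b - g2 z a b\<bar> < e"
    using d1' by (simp add: dist_real_def)
  show False using 1 2 eq by (simp add: e_def abs_if split: if_splits)
qed



lemma sym_inner:
  fixes H :: "real^'k^'k"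
  assumes sym: "\<And>i j. H$i$j = H$j$i"
  shows "x \<bullet> (H *v y) = y \<bullet> (H *v x)"
proof -
  have "x \<bullet> (H *v y) = (\<Sum>i\<in>UNIV. \<Sum>j\<in>UNIV. x$i * H$i$j * y$j)"
    by (simp add: inner_vec_def matrix_vector_mult_def sum_distrib_left mult.assoc)
  also have "\<dots> = (\<Sum>j\<in>UNIV. \<Sum>i\<in>UNIV. x$i * H$i$j * y$j)" by (rule sum.swap)
  also have "\<dots> = y \<bullet> (H *v x)"
    by (simp add: inner_vec_def matrix_vector_mult_def sum_distrib_left sym mult.commute mult.left_commute)
  finally show ?thesis .
qed

lemma quad_expand:
  fixes H :: "real^'k^'k"
  assumes sym: "\<And>i j. H$i$j = H$j$i"
  shows "(v + s *\<^sub>R w) \<bullet> (H *v (v + s *\<^sub>R w)) = v \<bullet> (H *v v) + 2 * s * (w \<bullet> (H *v v)) + s\<^sup>2 * (w \<bullet> (H *v w))"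
  using sym_inner[OF sym, of v w]
  by (simp add: matrix_vector_right_distrib matrix_vector_mult_scaleR inner_add_left inner_add_right
      power2_eq_square algebra_simps)

lemma lin_coeff_zero:
  fixes c d :: real
  assumes "\<And>s. 2 * s * c + s\<^sup>2 * d \<ge> 0"
  shows "c = 0"
proof (rule ccontr)
  assume c: "c \<noteq> 0"
  define s where "s = - c / (\<bar>d\<bar> + 1)"
  have p: "\<bar>d\<bar> + 1 > 0" by simp
  have "s\<^sup>2 * d \<le> s\<^sup>2 * (\<bar>d\<bar> + 1)" by (intro mult_left_mono) auto
  also have "\<dots> = c\<^sup>2 / (\<bar>d\<bar> + 1)"
  proof -
    have "\<forall>a::real. a > 0 \<longrightarrow> (- c / a)\<^sup>2 * a = c\<^sup>2 / a" by (simp add: power2_eq_square field_simps)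
    then show ?thesis using p unfolding s_def by blast
  qed
  finally have 1: "s\<^sup>2 * d \<le> c\<^sup>2 / (\<bar>d\<bar> + 1)" .
  have 2: "2 * s * c = - 2 * c\<^sup>2 / (\<bar>d\<bar> + 1)" by (simp add: s_def power2_eq_square)
  have "c\<^sup>2 > 0" using c by simp
  then have "c\<^sup>2 / (\<bar>d\<bar> + 1) > 0" using p by simp
  then have "2 * s * c + s\<^sup>2 * d < 0" using 1 2 by simp
  then show False using assms[of s] by simp
qed

lemma psd_from_eig:
  fixes H :: "real^'k^'k"
  assumes sym: "\<And>i j. H$i$j = H$j$i" and eig: "\<forall>k. mat_eigenvalue H k \<longrightarrow> k > \<alpha>"
  shows "v \<bullet> (H *v v) \<ge> \<alpha> * (norm v)\<^sup>2"
proof -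
  let ?q = "\<lambda>v. v \<bullet> (H *v v)"
  have cont: "continuous_on (sphere 0 1) ?q"
    by (intro continuous_intros continuous_on_compose2[OF matrix_vector_mult_linear_continuous_on]) auto
  have ne: "sphere (0::real^'k) 1 \<noteq> {}" by simp
  obtain v0 where v0: "v0 \<in> sphere 0 1" and min: "\<And>y. y \<in> sphere 0 1 \<Longrightarrow> ?q v0 \<le> ?q y"
    using continuous_attains_inf[OF compact_sphere ne cont] by blast
  define l where "l = ?q v0"
  have nv0: "norm v0 = 1" using v0 by simp
  have lb: "?q u \<ge> l * (norm u)\<^sup>2" for u
  proof (cases "u = 0")
    case True then show ?thesis by simp
  next
    case False
    then have nu: "norm u > 0" by simp
    have "l \<le> ?q (u /\<^sub>R norm u)" unfolding l_def using nu by (intro min) simp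
    also have "\<dots> = ?q u / (norm u)\<^sup>2"
      by (simp add: matrix_vector_mult_scaleR power2_eq_square divide_inverse_commute)
    finally show ?thesis using nu by (simp add: field_simps)
  qed
  have ev: "H *v v0 = l *\<^sub>R v0"
  proof -
    define w where "w = H *v v0 - l *\<^sub>R v0"
    have "2 * s * (w \<bullet> (H *v v0 - l *\<^sub>R v0)) + s\<^sup>2 * (?q w - l * (norm w)\<^sup>2) \<ge> 0" for s
    proof -
      have "?q (v0 + s *\<^sub>R w) - l * (norm (v0 + s *\<^sub>R w))\<^sup>2 \<ge> 0" using lb[of "v0 + s *\<^sub>R w"] by simp
      moreover have "(norm (v0 + s *\<^sub>R w))\<^sup>2 = 1 + 2 * s * (w \<bullet> v0) + s\<^sup>2 * (norm w)\<^sup>2"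
      proof -
        have "v0 \<bullet> v0 = 1" using nv0 by (simp add: dot_square_norm)
        moreover have "w \<bullet> w = (norm w)\<^sup>2" by (simp add: dot_square_norm)
        ultimately show ?thesis
          unfolding power2_norm_eq_inner[of "v0 + s *\<^sub>R w"]
          by (simp add: inner_add_left inner_add_right inner_commute power2_eq_square algebra_simps)
      qed
      ultimately show ?thesis
        unfolding quad_expand[OF sym] l_def[symmetric] using nv0
        by (simp add: inner_diff_right algebra_simps)
    qed
    from lin_coeff_zero[OF this] have "w \<bullet> w = 0" by (simp add: w_def)
    then show ?thesis by (simp add: w_def)
  qed
  have "v0 \<noteq> 0" using nv0 by auto
  then have "mat_eigenvalue H l" using ev unfolding mat_eigenvalue_def by blast
  then have "l > \<alpha>" using eig by blast
  then have "l * (norm v)\<^sup>2 \<ge> \<alpha> * (norm v)\<^sup>2" by (simp add: mult_right_mono)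
  then show ?thesis using lb[of v] by linarith
qed

lemma quad_upper:
  fixes H :: "real^'k^'k"
  assumes K: "\<And>i j. \<bar>H$i$j\<bar> \<le> K"
  shows "\<bar>v \<bullet> (H *v v)\<bar> \<le> K * (real CARD('k))\<^sup>2 * (norm v)\<^sup>2"
proof -
  have "\<bar>v \<bullet> (H *v v)\<bar> = \<bar>\<Sum>i\<in>UNIV. \<Sum>j\<in>UNIV. v$i * H$i$j * v$j\<bar>"
    by (simp add: inner_vec_def matrix_vector_mult_def sum_distrib_left mult.assoc)
  also have "\<dots> \<le> (\<Sum>i\<in>UNIV. \<Sum>j\<in>UNIV. \<bar>v$i * H$i$j * v$j\<bar>)"
    by (rule order_trans[OF sum_abs sum_mono]) (rule sum_abs)
  also have "\<dots> \<le> (\<Sum>i\<in>(UNIV::'k set). \<Sum>j\<in>(UNIV::'k set). K * (norm v)\<^sup>2)"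
  proof (intro sum_mono)
    fix i j
    have "\<bar>v$i * H$i$j * v$j\<bar> = \<bar>H$i$j\<bar> * (\<bar>v$i\<bar> * \<bar>v$j\<bar>)" by (simp add: abs_mult)
    also have "\<dots> \<le> K * (norm v * norm v)"
      by (intro mult_mono K mult_mono component_le_norm_cart) (auto intro: order_trans[OF abs_ge_zero K])
    finally show "\<bar>v$i * H$i$j * v$j\<bar> \<le> K * (norm v)\<^sup>2" by (simp add: power2_eq_square)
  qed
  also have "\<dots> = K * (real CARD('k))\<^sup>2 * (norm v)\<^sup>2" by (simp add: power2_eq_square)
  finally show ?thesis .
qed

lemma norm_joinxu: "(norm (joinxu x u))\<^sup>2 = (norm x)\<^sup>2 + (norm u)\<^sup>2"
  by (simp add: power2_norm_eq_inner inner_vec_def joinxu_def UNIV_Plus_UNIV[symmetric] sum.Plus o_def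
      del: UNIV_Plus_UNIV)

lemma quad_joinxu:
  fixes H :: "real^('n::finite + 'm::finite)^('n + 'm)"
  assumes sym: "\<And>i j. H$i$j = H$j$i"
  shows "joinxu x u \<bullet> (H *v joinxu x u)
    = x \<bullet> ((\<chi> i j. H $ Inl i $ Inl j) *v x) + 2 * (x \<bullet> ((\<chi> i j. H $ Inl i $ Inr j) *v u))
      + u \<bullet> ((\<chi> i j. H $ Inr i $ Inr j) *v u)"
proof -
  have split: "sum g (UNIV :: ('n + 'm) set) = sum (g \<circ> Inl) UNIV + sum (g \<circ> Inr) UNIV" for g :: "_ \<Rightarrow> real"
    by (simp add: UNIV_Plus_UNIV[symmetric] sum.Plus del: UNIV_Plus_UNIV)
  have cross: "(\<Sum>i\<in>UNIV. u$i * (\<Sum>j\<in>UNIV. H $ Inr i $ Inl j * x$j))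
      = (\<Sum>i\<in>UNIV. x$i * (\<Sum>j\<in>UNIV. H $ Inl i $ Inr j * u$j))"
  proof -
    have "(\<Sum>i\<in>UNIV. u$i * (\<Sum>j\<in>UNIV. H $ Inr i $ Inl j * x$j))
        = (\<Sum>i\<in>UNIV. \<Sum>j\<in>UNIV. u$i * H $ Inr i $ Inl j * x$j)"
      by (simp add: sum_distrib_left mult.assoc)
    also have "\<dots> = (\<Sum>j\<in>UNIV. \<Sum>i\<in>UNIV. u$i * H $ Inr i $ Inl j * x$j)" by (rule sum.swap)
    also have "\<dots> = (\<Sum>i\<in>UNIV. x$i * (\<Sum>j\<in>UNIV. H $ Inl i $ Inr j * u$j))"
      by (simp add: sum_distrib_left sym[of "Inr _"] mult.commute mult.left_commute)
    finally show ?thesis .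
  qed
  show ?thesis
    unfolding inner_vec_def matrix_vector_mult_def
    by (simp add: split o_def joinxu_def sum.distrib distrib_left cross)
qed



definition vinf :: "real^'n \<Rightarrow> real" where "vinf v = Max (range (\<lambda>k. \<bar>v$k\<bar>))"

lemma vinf_ge: "\<bar>v$k\<bar> \<le> vinf v"
  unfolding vinf_def by (rule Max_ge) auto

lemma vinf_nonneg: "0 \<le> vinf v"
  using vinf_ge[of v undefined] by linarith

lemma vinf_le: "(\<And>k. \<bar>v$k\<bar> \<le> c) \<Longrightarrow> vinf v \<le> c"
  unfolding vinf_def by (rule Max.boundedI) auto

lemma vinf_le_norm: "vinf v \<le> norm v"
  by (rule vinf_le) (rule component_le_norm_cart)

lemma norm_le_vinf: "norm v \<le> real CARD('n) * vinf (v::real^'n)"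
proof -
  have "norm v \<le> (\<Sum>k\<in>UNIV. \<bar>v$k\<bar>)" by (rule norm_le_l1_cart)
  also have "\<dots> \<le> (\<Sum>k\<in>(UNIV::'n set). vinf v)" by (intro sum_mono vinf_ge)
  finally show ?thesis by simp
qed

lemma vinf_matvec:
  fixes A :: "real^'n^'n"
  assumes "mat_norm_inf A \<le> a"
  shows "vinf (A *v v) \<le> a * vinf v"
proof (rule vinf_le)
  fix k
  have "\<bar>(A *v v)$k\<bar> = \<bar>\<Sum>l\<in>UNIV. A$k$l * v$l\<bar>" by (simp add: matrix_vector_mult_def)
  also have "\<dots> \<le> (\<Sum>l\<in>UNIV. \<bar>A$k$l\<bar> * vinf v)"
    by (rule order_trans[OF sum_abs sum_mono]) (simp add: abs_mult mult_left_mono vinf_ge)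
  also have "\<dots> = (\<Sum>l\<in>UNIV. \<bar>A$k$l\<bar>) * vinf v" by (simp add: sum_distrib_right)
  also have "\<dots> \<le> mat_norm_inf A * vinf v"
    unfolding mat_norm_inf_def by (intro mult_right_mono Max_ge vinf_nonneg) auto
  also have "\<dots> \<le> a * vinf v" using assms by (intro mult_right_mono vinf_nonneg)
  finally show "\<bar>(A *v v)$k\<bar> \<le> a * vinf v" .
qed

lemma vinf_sum:
  "vinf (\<Sum>j\<in>J. c j *\<^sub>R w j) \<le> (\<Sum>j\<in>J. \<bar>c j\<bar> * vinf (w j))"
proof (rule vinf_le)
  fix k
  have "\<bar>(\<Sum>j\<in>J. c j *\<^sub>R w j)$k\<bar> = \<bar>\<Sum>j\<in>J. c j * w j $ k\<bar>" by (simp add: sum_component)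
  also have "\<dots> \<le> (\<Sum>j\<in>J. \<bar>c j\<bar> * vinf (w j))"
    by (rule order_trans[OF sum_abs sum_mono]) (simp add: abs_mult mult_left_mono vinf_ge)
  finally show "\<bar>(\<Sum>j\<in>J. c j *\<^sub>R w j)$k\<bar> \<le> (\<Sum>j\<in>J. \<bar>c j\<bar> * vinf (w j))" .
qed

lemma vinf_add: "vinf (v + w) \<le> vinf v + vinf w"
  by (rule vinf_le) (auto intro: order_trans[OF abs_triangle_ineq add_mono] vinf_ge)

lemma contraction_fix:
  fixes Am :: "nat \<Rightarrow> real^'n^'n" and r :: "nat \<Rightarrow> real^'n" and M :: "nat \<Rightarrow> nat \<Rightarrow> real"
  assumes Msum: "\<forall>i\<in>{1..N}. (\<Sum>j=1..N. \<bar>M i j\<bar>) \<le> 2"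
    and A: "\<forall>j\<in>{1..N}. mat_norm_inf (Am j) \<le> 1/4"
    and r: "\<forall>j\<in>{1..N}. vinf (r j) \<le> \<rho>" and rho: "\<rho> \<ge> 0"
  shows "\<exists>V. (\<forall>i\<in>{1..N}. V i = (\<Sum>j=1..N. M i j *\<^sub>R (Am j *v V j + r j)))
              \<and> (\<forall>i\<in>{1..N}. vinf (V i) \<le> 4 * \<rho>)"
proof -
  define \<Phi> where "\<Phi> V = (\<lambda>i. \<Sum>j=1..N. M i j *\<^sub>R (Am j *v V j + r j))" for V :: "nat \<Rightarrow> real^'n"
  have contr: "vinf (\<Phi> W i - \<Phi> W' i) \<le> B / 2"
    if i: "i \<in> {1..N}" and B: "B \<ge> 0" "\<forall>j\<in>{1..N}. vinf (W j - W' j) \<le> B" for W W' i B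
  proof -
    have "\<Phi> W i - \<Phi> W' i = (\<Sum>j=1..N. M i j *\<^sub>R (Am j *v (W j - W' j)))"
      by (simp add: \<Phi>_def sum_subtractf[symmetric] scaleR_diff_right[symmetric] matrix_vector_mult_diff_distrib)
    then have "vinf (\<Phi> W i - \<Phi> W' i) \<le> (\<Sum>j=1..N. \<bar>M i j\<bar> * vinf (Am j *v (W j - W' j)))"
      using vinf_sum by simp
    also have "\<dots> \<le> (\<Sum>j=1..N. \<bar>M i j\<bar> * (B / 4))"
    proof (intro sum_mono mult_left_mono)
      fix j assume j: "j \<in> {1..N}"
      have "vinf (Am j *v (W j - W' j)) \<le> 1/4 * vinf (W j - W' j)" using A j vinf_matvec by blast
      also have "\<dots> \<le> B / 4" using B j by auto
      finally show "vinf (Am j *v (W j - W' j)) \<le> B / 4" .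
    qed simp
    also have "\<dots> = (\<Sum>j=1..N. \<bar>M i j\<bar>) * (B / 4)" by (simp add: sum_distrib_right)
    also have "\<dots> \<le> 2 * (B / 4)" using Msum i B by (intro mult_right_mono) auto
    finally show ?thesis by simp
  qed
  define Vs where "Vs k = (\<Phi> ^^ k) (\<lambda>_. 0)" for k
  have VsS: "Vs (Suc k) = \<Phi> (Vs k)" for k by (simp add: Vs_def)
  define R0 where "R0 = (\<Sum>i=1..N. vinf (Vs 1 i - Vs 0 i))"
  have R0: "R0 \<ge> 0" unfolding R0_def by (intro sum_nonneg vinf_nonneg)
  have step: "\<forall>i\<in>{1..N}. vinf (Vs (Suc k) i - Vs k i) \<le> (1/2)^k * R0" for k
  proof (induction k)
    case 0
    show ?case unfolding R0_def
      by (auto intro!: member_le_sum vinf_nonneg)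
  next
    case (Suc k)
    show ?case
    proof
      fix i assume i: "i \<in> {1..N}"
      have "vinf (\<Phi> (Vs (Suc k)) i - \<Phi> (Vs k) i) \<le> (1/2)^k * R0 / 2"
        by (rule contr[OF i]) (use Suc R0 in auto)
      then show "vinf (Vs (Suc (Suc k)) i - Vs (Suc k) i) \<le> (1/2)^(Suc k) * R0"
        by (simp add: VsS)
    qed
  qed
  define L where "L i = (\<Sum>k. Vs (Suc k) i - Vs k i)" for i
  have conv: "(\<lambda>k. Vs k i) \<longlonglongrightarrow> L i" if i: "i \<in> {1..N}" for i
  proof -
    have "summable (\<lambda>k. Vs (Suc k) i - Vs k i)"
    proof (rule summable_comparison_test)
      show "\<exists>N0. \<forall>n\<ge>N0. norm (Vs (Suc n) i - Vs n i) \<le> real CARD('n) * R0 * (1/2)^n"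
      proof (intro exI allI impI)
        fix n
        have "norm (Vs (Suc n) i - Vs n i) \<le> real CARD('n) * vinf (Vs (Suc n) i - Vs n i)"
          by (rule norm_le_vinf)
        also have "\<dots> \<le> real CARD('n) * ((1/2)^n * R0)"
          using step i by (intro mult_left_mono) auto
        finally show "norm (Vs (Suc n) i - Vs n i) \<le> real CARD('n) * R0 * (1/2)^n"
          by (simp only: mult_ac)
      qed
      show "summable (\<lambda>n. real CARD('n) * R0 * (1/2)^n)"
        by (intro summable_mult summable_geometric) simp
    qed
    then have "(\<lambda>n. \<Sum>k<n. Vs (Suc k) i - Vs k i) \<longlonglongrightarrow> L i"
      unfolding L_def by (rule summable_LIMSEQ)
    moreover have "(\<Sum>k<n. Vs (Suc k) i - Vs k i) = Vs n i" for n
    proof -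
      have "(\<Sum>k<n. Vs (Suc k) i - Vs k i) = Vs n i - Vs 0 i" by (rule sum_lessThan_telescope)
      moreover have "Vs 0 i = 0" unfolding Vs_def by simp
      ultimately show ?thesis by (metis diff_zero)
    qed
    ultimately show ?thesis by simp
  qed
  have fix1: "L i = \<Phi> L i" if i: "i \<in> {1..N}" for i
  proof -
    have "(\<lambda>k. Vs (Suc k) i) \<longlonglongrightarrow> L i" using conv[OF i] by (rule LIMSEQ_Suc)
    moreover have "(\<lambda>k. Vs (Suc k) i) \<longlonglongrightarrow> \<Phi> L i"
    proof -
      have "(\<lambda>k. M i j *\<^sub>R (Am j *v Vs k j + r j)) \<longlonglongrightarrow> M i j *\<^sub>R (Am j *v L j + r j)"
        if j: "j \<in> {1..N}" for j
      proof -
        have "(\<lambda>k. Am j *v Vs k j) \<longlonglongrightarrow> Am j *v L j"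
          by (rule bounded_linear.tendsto[OF matrix_vector_mul_bounded_linear conv[OF j]])
        then have "(\<lambda>k. Am j *v Vs k j + r j) \<longlonglongrightarrow> Am j *v L j + r j"
          by (rule tendsto_add) (rule tendsto_const)
        then show ?thesis by (rule tendsto_scaleR[OF tendsto_const])
      qed
      then have "(\<lambda>k. \<Sum>j=1..N. M i j *\<^sub>R (Am j *v Vs k j + r j)) \<longlonglongrightarrow> (\<Sum>j=1..N. M i j *\<^sub>R (Am j *v L j + r j))"
        by (rule tendsto_sum)
      moreover have E1: "(\<lambda>k. Vs (Suc k) i) = (\<lambda>k. \<Sum>j=1..N. M i j *\<^sub>R (Am j *v Vs k j + r j))"
        by (simp only: VsS \<Phi>_def)
      moreover have E2: "\<Phi> L i = (\<Sum>j=1..N. M i j *\<^sub>R (Am j *v L j + r j))"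
        by (simp only: \<Phi>_def)
      ultimately show ?thesis by (simp only: E1 E2)
    qed
    ultimately show ?thesis by (rule LIMSEQ_unique)
  qed
  have bound: "\<forall>i\<in>{1..N}. vinf (L i) \<le> 4 * \<rho>"
  proof (cases "N = 0")
    case True then show ?thesis by simp
  next
    case False
    define m where "m = Max ((\<lambda>i. vinf (L i)) ` {1..N})"
    have mge: "vinf (L i) \<le> m" if "i \<in> {1..N}" for i unfolding m_def using that by (intro Max_ge) auto
    have one: "1 \<in> {1..N}" using False by simp
    have m0: "m \<ge> 0" using mge[OF one] vinf_nonneg[of "L 1"] by linarith
    have "m \<in> (\<lambda>i. vinf (L i)) ` {1..N}" unfolding m_def using False by (intro Max_in) auto
    then obtain i where i: "i \<in> {1..N}" and mi: "m = vinf (L i)" by blast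
    have "vinf (L i) = vinf (\<Phi> L i)" using fix1[OF i] by simp
    also have "\<dots> \<le> (\<Sum>j=1..N. \<bar>M i j\<bar> * vinf (Am j *v L j + r j))"
      unfolding \<Phi>_def by (rule vinf_sum)
    also have "\<dots> \<le> (\<Sum>j=1..N. \<bar>M i j\<bar> * (m / 4 + \<rho>))"
    proof (intro sum_mono mult_left_mono)
      fix j assume j: "j \<in> {1..N}"
      have "vinf (Am j *v L j + r j) \<le> vinf (Am j *v L j) + vinf (r j)" by (rule vinf_add)
      also have "\<dots> \<le> 1/4 * vinf (L j) + \<rho>"
        using A r j vinf_matvec by (intro add_mono) blast+
      also have "\<dots> \<le> m / 4 + \<rho>" using mge[OF j] by simp
      finally show "vinf (Am j *v L j + r j) \<le> m / 4 + \<rho>" .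
    qed simp
    also have "\<dots> = (\<Sum>j=1..N. \<bar>M i j\<bar>) * (m / 4 + \<rho>)" by (simp add: sum_distrib_right)
    also have "\<dots> \<le> 2 * (m / 4 + \<rho>)" using Msum i m0 rho by (intro mult_right_mono) auto
    finally have "m \<le> 4 * \<rho>" using mi by simp
    then show ?thesis
    proof (intro ballI)
      fix i assume "i \<in> {1..N}"
      then show "vinf (L i) \<le> 4 * \<rho>" using mge \<open>m \<le> 4 * \<rho>\<close> by (meson order_trans)
    qed
  qed
  show ?thesis using fix1 bound unfolding \<Phi>_def by blast
qed



lemma gr_mono:
  assumes gr: "gauss_radau N tau omega"
  shows "i < j \<Longrightarrow> j \<le> N \<Longrightarrow> tau i < tau j"
proof (induction j)
  case 0 then show ?case by simp
next
  case (Suc j)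
  have st: "tau j < tau (Suc j)"
  proof (cases "j = 0")
    case True then show ?thesis using gr by (simp add: gauss_radau_def)
  next
    case False then show ?thesis using gr Suc.prems by (auto simp: gauss_radau_def)
  qed
  show ?case
  proof (cases "i = j")
    case True then show ?thesis using st by simp
  next
    case False
    then have "tau i < tau j" using Suc by simp
    then show ?thesis using st by simp
  qed
qed

lemma gr_inj: "gauss_radau N tau omega \<Longrightarrow> inj_on tau {0..N}"
  by (rule inj_onI) (metis atLeastAtMost_iff gr_mono less_irrefl nat_neq_iff)

lemma gr_range:
  assumes gr: "gauss_radau N tau omega" and i: "i \<in> {1..N}"
  shows "tau i \<in> {-1..1}"
proof -
  have "tau 0 \<le> tau i" using gr_mono[OF gr, of 0 i] i by (cases "i = 0") auto
  moreover have "tau i \<le> tau N" using gr_mono[OF gr, of i N] i by (cases "i = N") auto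
  ultimately show ?thesis using gr by (simp add: gauss_radau_def)
qed

lemma gr_omega_sum:
  assumes gr: "gauss_radau N tau omega"
  shows "(\<Sum>i=1..N. omega i) = 2"
proof -
  have "(\<Sum>i=1..N. omega i * poly 1 (tau i)) = integral {-1..1} (poly 1)"
    using gr unfolding gauss_radau_def by (metis degree_1 zero_le)
  moreover have "poly (1 :: real poly) = (\<lambda>x. 1)" by auto
  ultimately show ?thesis by (simp add: integral_const_real)
qed

lemma hess_facts:
  fixes g :: "real^'k \<Rightarrow> real"
  assumes S: "open S" "z \<in> S"
    and d1: "\<And>w. w \<in> S \<Longrightarrow> (g has_derivative g1 w) (at w)"
    and d2: "\<And>w h. w \<in> S \<Longrightarrow> ((\<lambda>w. g1 w h) has_derivative (\<lambda>k. g2 w k h)) (at w)"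
    and c: "\<And>a b. isCont (\<lambda>w. g2 w a b) z"
  shows "hess_mat g z $ i $ j = g2 z (axis i 1) (axis j 1)"
    and "hess_mat g z $ i $ j = hess_mat g z $ j $ i"
proof -
  have e: "hess_mat g z $ i $ j = g2 z (axis i 1) (axis j 1)" for i j
    by (rule hess_entry[OF S d1 d2[OF S(2)]])
  show "hess_mat g z $ i $ j = g2 z (axis i 1) (axis j 1)" by (rule e)
  show "hess_mat g z $ i $ j = hess_mat g z $ j $ i"
    unfolding e by (rule schwarz[OF S d1 d2 c])
qed

lemma C2_facts:
  fixes F :: "real^'k \<Rightarrow> real^'l"
  assumes C2: "C2_on G F"
  obtains F1 :: "real^'k \<Rightarrow> (real^'k) \<Rightarrow>\<^sub>L (real^'l)" and F2 where "open G"
    "\<And>w. w \<in> G \<Longrightarrow> (F has_derivative blinfun_apply (F1 w)) (at w)"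
    "\<And>w. w \<in> G \<Longrightarrow> (F1 has_derivative blinfun_apply (F2 w)) (at w)"
    "continuous_on G F2"
  using C2 unfolding C2_on_def by blast

lemma hess_inner_facts:
  fixes F :: "real^'k \<Rightarrow> real^'l"
  assumes G: "open G" "z \<in> G"
    and d1: "\<And>w. w \<in> G \<Longrightarrow> (F has_derivative blinfun_apply (F1 w)) (at w)"
    and d2: "\<And>w. w \<in> G \<Longrightarrow> (F1 has_derivative blinfun_apply (F2 w)) (at w)"
    and c: "continuous_on G F2"
  shows "hess_mat (\<lambda>w. l \<bullet> F w) z $ i $ j = l \<bullet> (F2 z (axis i 1) (axis j 1))"
    and "hess_mat (\<lambda>w. l \<bullet> F w) z $ i $ j = hess_mat (\<lambda>w. l \<bullet> F w) z $ j $ i"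
proof -
  have D1: "((\<lambda>w. l \<bullet> F w) has_derivative (\<lambda>h. l \<bullet> F1 w h)) (at w)" if "w \<in> G" for w
    using bounded_linear.has_derivative[OF bounded_linear_inner_right d1[OF that]] .
  have D2: "((\<lambda>w. l \<bullet> F1 w h) has_derivative (\<lambda>k. l \<bullet> F2 w k h)) (at w)" if "w \<in> G" for w h
  proof -
    have bl: "bounded_linear (\<lambda>A. l \<bullet> blinfun_apply A h)"
      by (rule bounded_linear_inner_right_comp[OF bounded_linear_apply_blinfun])
    show ?thesis using bounded_linear.has_derivative[OF bl d2[OF that]] .
  qed
  have C: "isCont (\<lambda>w. l \<bullet> F2 w a b) z" for a b
  proof -
    have "isCont F2 z" using c G by (simp add: continuous_on_eq_continuous_at)
    then show ?thesis by (intro continuous_intros)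
  qed
  show "hess_mat (\<lambda>w. l \<bullet> F w) z $ i $ j = l \<bullet> (F2 z (axis i 1) (axis j 1))"
    by (rule hess_facts(1)[OF G D1 D2 C])
  show "hess_mat (\<lambda>w. l \<bullet> F w) z $ i $ j = hess_mat (\<lambda>w. l \<bullet> F w) z $ j $ i"
    by (rule hess_facts(2)[OF G D1 D2 C])
qed

lemma hess_scalar_sym:
  fixes C :: "real^'k \<Rightarrow> real"
  assumes C2: "C2_on G C" and z: "z \<in> G"
  shows "hess_mat C z $ i $ j = hess_mat C z $ j $ i"
proof -
  obtain F1 :: "real^'k \<Rightarrow> (real^'k) \<Rightarrow>\<^sub>L real" and F2 where G: "open G"
    and d1: "\<And>w. w \<in> G \<Longrightarrow> (C has_derivative blinfun_apply (F1 w)) (at w)"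
    and d2: "\<And>w. w \<in> G \<Longrightarrow> (F1 has_derivative blinfun_apply (F2 w)) (at w)"
    and c: "continuous_on G F2"
    using C2 unfolding C2_on_def by blast
  have D2: "((\<lambda>w. F1 w h) has_derivative (\<lambda>k. F2 w k h)) (at w)" if "w \<in> G" for w h
    using bounded_linear.has_derivative[OF bounded_linear_apply_blinfun d2[OF that]] .
  have Cc: "isCont (\<lambda>w. F2 w a b) z" for a b
  proof -
    have "isCont F2 z" using c G z by (simp add: continuous_on_eq_continuous_at)
    then show ?thesis by (intro continuous_intros)
  qed
  show ?thesis by (rule hess_facts(2)[OF G z d1 D2 Cc])
qed



lemma young: "(a::real) > 0 \<Longrightarrow> Y * x \<le> a / 4 * x\<^sup>2 + Y\<^sup>2 / a"
proof -
  assume a: "a > 0"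
  have "0 \<le> (a * x - 2 * Y)\<^sup>2 / (4 * a)" using a by simp
  also have "(a * x - 2 * Y)\<^sup>2 / (4 * a) = a / 4 * x\<^sup>2 + Y\<^sup>2 / a - Y * x"
    using a by (simp add: power2_eq_square field_simps)
  finally show ?thesis by simp
qed

lemma lin_final:
  fixes p1 p2 p3 zq sz qh sh P q2 z4 kk :: real
  shows "p2 \<le> p1 \<Longrightarrow> zq / 2 - sz \<le> qh / 2 - sh \<Longrightarrow> p1 + p3 \<le> zq \<Longrightarrow>
    \<bar>sz\<bar> \<le> (p2 + p3) / 4 + z4 \<Longrightarrow> qh \<le> P \<Longrightarrow> \<bar>sh\<bar> \<le> q2 \<Longrightarrow>
    kk = P / 2 + q2 + z4 \<Longrightarrow> p1 + p3 \<le> 4 * kk"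
  apply (simp add: abs_le_iff)
  by argo

lemma main_N:
  fixes f :: "real^'n \<Rightarrow> real^'m \<Rightarrow> real^'n" and C :: "real^'n \<Rightarrow> real"
    and xs :: "real \<Rightarrow> real^'n" and us :: "real \<Rightarrow> real^'m" and ls :: "real \<Rightarrow> real^'n"
  assumes N: "N \<ge> 1" and gr: "gauss_radau N tau omega" and P1: "radau_P1 N tau"
    and a: "\<alpha> > 0"
    and Tpos: "\<And>v. v \<bullet> (hess_mat C (xs 1) *v v) \<ge> \<alpha> * (norm v)\<^sup>2"
    and Tup: "\<And>v. \<bar>v \<bullet> (hess_mat C (xs 1) *v v)\<bar> \<le> KT * (norm v)\<^sup>2"
    and Hpos: "\<And>t w. t \<in> {-1..1} \<Longrightarrow> w \<bullet> (HessH f xs us ls t *v w) \<ge> \<alpha> * (norm w)\<^sup>2"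
    and Hsym: "\<And>t i j. t \<in> {-1..1} \<Longrightarrow> HessH f xs us ls t $ i $ j = HessH f xs us ls t $ j $ i"
    and Qup: "\<And>t v. t \<in> {-1..1} \<Longrightarrow> \<bar>v \<bullet> (Qmat f xs us ls t *v v)\<bar> \<le> KQ * (norm v)\<^sup>2"
    and A3: "\<forall>t\<in>{-1..1}. mat_norm_inf (Amat f xs us t) \<le> 1/4"
    and sol: "qp_solution f C xs us ls N tau omega y1 y2 y3 y4 y5 y6 X U"
  defines "K1 \<equiv> 1 + 5 * real CARD('n)"
  defines "K3 \<equiv> (KT + 2 * KQ) * K1\<^sup>2 / 2 + 2 * K1 + 4 / \<alpha>"
  shows "normX_omega N omega X \<le> sqrt (4 * K3 / \<alpha>) * data_norm N y1 y2 y3 y4 y5 y6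
       \<and> normU_omega N omega U \<le> sqrt (4 * K3 / \<alpha>) * data_norm N y1 y2 y3 y4 y5 y6"
proof -
  define Y where "Y = data_norm N y1 y2 y3 y4 y5 y6"
  define y4e where "y4e = y4ext N y4 y5"
  let ?D = "radau_D N tau"
  let ?A = "\<lambda>j. Amat f xs us (tau j)"
  have fin: "finite ((\<lambda>i. norm (y1 i)) ` {1..N} \<union> {norm y2, norm y3, norm y5}
          \<union> (\<lambda>i. norm (y4 i)) ` {1..<N} \<union> (\<lambda>i. norm (y6 i)) ` {1..N})" by simp
  have Y1: "norm (y1 i) \<le> Y" if "i \<in> {1..N}" for i
    unfolding Y_def data_norm_def using that by (intro Max_ge[OF fin]) auto
  have Y2: "norm y2 \<le> Y"
    unfolding Y_def data_norm_def by (intro Max_ge[OF fin]) auto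
  have Y4: "norm (y4e i) \<le> Y" if "i \<in> {1..N}" for i
  proof (cases "i = N")
    case True
    then have "y4e i = y5" by (simp add: y4e_def y4ext_def)
    then show ?thesis unfolding Y_def data_norm_def by (simp only:) (intro Max_ge[OF fin], auto)
  next
    case False
    then have "y4e i = y4 i" by (simp add: y4e_def y4ext_def)
    moreover have "i \<in> {1..<N}" using that False by auto
    ultimately show ?thesis unfolding Y_def data_norm_def by (simp only:) (intro Max_ge[OF fin], auto)
  qed
  have Y6: "norm (y6 i) \<le> Y" if "i \<in> {1..N}" for i
    unfolding Y_def data_norm_def using that by (intro Max_ge[OF fin]) auto
  have Y0: "Y \<ge> 0" using Y2 norm_ge_zero order_trans by blast
  have om: "omega i > 0" if "i \<in> {1..N}" for i using gr that by (simp add: gauss_radau_def)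
  have omsum: "(\<Sum>i=1..N. omega i) = 2" by (rule gr_omega_sum[OF gr])
  have om2: "sum omega {Suc 0..N} = 2" using omsum by simp
  have tr: "tau i \<in> {-1..1}" if "i \<in> {1..N}" for i by (rule gr_range[OF gr that])
  obtain M where DM: "\<forall>i\<in>{1..N}. \<forall>k\<in>{1..N}. (\<Sum>j=1..N. ?D i j * M j k) = (if i = k then 1 else 0)"
    and Msum: "\<forall>i\<in>{1..N}. (\<Sum>j=1..N. \<bar>M i j\<bar>) \<le> 2"
    using P1 unfolding radau_P1_def by blast
  have Anorm: "\<forall>j\<in>{1..N}. mat_norm_inf (?A j) \<le> 1/4" using A3 tr by blast
  have rb: "\<forall>j\<in>{1..N}. vinf (?A j *v y2 + y1 j) \<le> 5/4 * Y"
  proof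
    fix j assume j: "j \<in> {1..N}"
    have "vinf (?A j *v y2 + y1 j) \<le> vinf (?A j *v y2) + vinf (y1 j)" by (rule vinf_add)
    also have "\<dots> \<le> 1/4 * vinf y2 + vinf (y1 j)"
      using vinf_matvec[of "?A j" "1/4" y2] Anorm j by (intro add_mono) auto
    also have "\<dots> \<le> 1/4 * Y + Y"
      using vinf_le_norm[of y2] vinf_le_norm[of "y1 j"] Y2 Y1[OF j] by (intro add_mono) auto
    finally show "vinf (?A j *v y2 + y1 j) \<le> 5/4 * Y" by simp
  qed
  obtain V where Vfix: "\<forall>i\<in>{1..N}. V i = (\<Sum>j=1..N. M i j *\<^sub>R (?A j *v V j + (?A j *v y2 + y1 j)))"
    and Vb: "\<forall>i\<in>{1..N}. vinf (V i) \<le> 4 * (5/4 * Y)"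
    using contraction_fix[OF Msum Anorm rb] Y0 by auto
  define Xh where "Xh j = y2 + (if j = 0 then 0 else V j)" for j
  define w where "w k = ?A k *v V k + (?A k *v y2 + y1 k)" for k
  have feas: "qp_feasible f xs us N tau y1 y2 Xh (\<lambda>_. 0)"
    unfolding qp_feasible_def
  proof (intro conjI ballI)
    show "Xh 0 = y2" by (simp add: Xh_def)
    fix i assume i: "i \<in> {1..N}"
    have s1: "(\<Sum>j=0..N. ?D i j *\<^sub>R Xh j)
        = (\<Sum>j=0..N. ?D i j) *\<^sub>R y2 + (\<Sum>j=0..N. ?D i j *\<^sub>R (if j = 0 then 0 else V j))"
      by (simp only: Xh_def scaleR_add_right sum.distrib scaleR_sum_left)
    have s2: "(\<Sum>j=0..N. ?D i j *\<^sub>R (if j = 0 then 0 else V j)) = (\<Sum>j=1..N. ?D i j *\<^sub>R V j)"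
      by (simp add: sum.atLeast_Suc_atMost)
    have s3: "(\<Sum>j=0..N. ?D i j) = 0" by (rule D_rowsum[OF gr_inj[OF gr]])
    have s4: "(\<Sum>j=1..N. ?D i j *\<^sub>R V j) = (\<Sum>j=1..N. ?D i j *\<^sub>R (\<Sum>k=1..N. M j k *\<^sub>R w k))"
      using Vfix unfolding w_def by (intro sum.cong) auto
    also have "\<dots> = (\<Sum>j=1..N. \<Sum>k=1..N. (?D i j * M j k) *\<^sub>R w k)"
      by (simp add: scaleR_sum_right)
    also have "\<dots> = (\<Sum>k=1..N. \<Sum>j=1..N. (?D i j * M j k) *\<^sub>R w k)"
      by (rule sum.swap)
    also have "\<dots> = (\<Sum>k=1..N. (\<Sum>j=1..N. ?D i j * M j k) *\<^sub>R w k)"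
      by (simp add: scaleR_sum_left)
    also have "\<dots> = (\<Sum>k=1..N. (if i = k then 1 else 0) *\<^sub>R w k)"
      using DM i by (intro sum.cong) auto
    also have "\<dots> = (\<Sum>k=1..N. if k = i then w k else 0)" by (intro sum.cong) auto
    also have "\<dots> = w i" using i by (simp only: sum.delta finite_atLeastAtMost) simp
    finally have s5: "(\<Sum>j=1..N. ?D i j *\<^sub>R V j) = w i" .
    have "Xh i = y2 + V i" using i by (simp add: Xh_def)
    then have "w i = ?A i *v Xh i + y1 i"
      by (simp add: w_def matrix_vector_right_distrib algebra_simps)
    then show "(\<Sum>j=0..N. ?D i j *\<^sub>R Xh j) = ?A i *v Xh i + Bmat f xs us (tau i) *v 0 + y1 i"
      using s1 s2 s3 s5 by simp
  qed
  have Xhb: "norm (Xh j) \<le> K1 * Y" if "j \<le> N" for j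
  proof (cases "j = 0")
    case True
    have "0 \<le> 5 * real CARD('n) * Y" using Y0 by simp
    then have "Y \<le> K1 * Y" by (simp add: K1_def algebra_simps)
    then show ?thesis using True Y2 by (simp add: Xh_def)
  next
    case False
    then have j: "j \<in> {1..N}" using that by auto
    have "norm (Xh j) \<le> norm y2 + norm (V j)" using False by (simp add: Xh_def norm_triangle_ineq)
    also have "\<dots> \<le> Y + real CARD('n) * (5 * Y)"
      using Y2 order_trans[OF norm_le_vinf mult_left_mono[OF Vb[rule_format, OF j]]] by simp
    also have "\<dots> = K1 * Y" by (simp add: K1_def algebra_simps)
    finally show ?thesis .
  qed
  let ?T = "hess_mat C (xs 1)"
  let ?Q = "\<lambda>i. Qmat f xs us ls (tau i)"
  let ?S = "\<lambda>i. Smat f xs us ls (tau i)"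
  let ?R = "\<lambda>i. Rmat f xs us ls (tau i)"
  let ?cost = "qp_cost f C xs us ls N tau omega y3 y4 y5 y6"
  define W0 where "W0 = y3 + (\<Sum>i=1..N. omega i *\<^sub>R y4e i)"
  have feasZ: "qp_feasible f xs us N tau y1 y2 X U" and le: "?cost X U \<le> ?cost Xh (\<lambda>_. 0)"
    using sol feas unfolding qp_solution_def by blast+
  have X0: "X 0 = y2" using feasZ by (simp add: qp_feasible_def)
  have Xh0: "Xh 0 = y2" by (simp add: Xh_def)
  define QZ where "QZ = X N \<bullet> (?T *v X N) + (\<Sum>i=1..N. omega i * (X i \<bullet> (?Q i *v X i)
      + 2 * (X i \<bullet> (?S i *v U i)) + U i \<bullet> (?R i *v U i)))"
  define SZ where "SZ = (\<Sum>i=1..N. omega i * (y4e i \<bullet> X i + y6 i \<bullet> U i))"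
  define QH where "QH = Xh N \<bullet> (?T *v Xh N) + (\<Sum>i=1..N. omega i * (Xh i \<bullet> (?Q i *v Xh i)))"
  define SH where "SH = (\<Sum>i=1..N. omega i * (y4e i \<bullet> Xh i))"
  have cZ: "?cost X U = QZ / 2 + (X 0 \<bullet> W0 - SZ)"
    unfolding qp_cost_def Let_def QZ_def SZ_def W0_def y4e_def ..
  have cH: "?cost Xh (\<lambda>_. 0) = QH / 2 + (Xh 0 \<bullet> W0 - SH)"
    unfolding qp_cost_def Let_def QH_def SH_def W0_def y4e_def by simp
  define A' where "A' = (\<Sum>i=1..N. omega i * (norm (X i))\<^sup>2)"
  define A where "A = (norm (X N))\<^sup>2 + A'"
  define B where "B = (\<Sum>i=1..N. omega i * (norm (U i))\<^sup>2)"
  have A'0: "A' \<ge> 0" unfolding A'_def using om by (intro sum_nonneg) (simp add: less_imp_le)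
  have B0: "B \<ge> 0" unfolding B_def using om by (intro sum_nonneg) (simp add: less_imp_le)
  have AA': "A' \<le> A" by (simp add: A_def)
  have A0: "A \<ge> 0" using A'0 AA' by linarith
  have L1: "QZ \<ge> \<alpha> * A + \<alpha> * B"
  proof -
    have "(\<Sum>i=1..N. omega i * (\<alpha> * ((norm (X i))\<^sup>2 + (norm (U i))\<^sup>2)))
        \<le> (\<Sum>i=1..N. omega i * (X i \<bullet> (?Q i *v X i) + 2 * (X i \<bullet> (?S i *v U i)) + U i \<bullet> (?R i *v U i)))"
    proof (intro sum_mono mult_left_mono)
      fix i assume i: "i \<in> {1..N}"
      have "X i \<bullet> (?Q i *v X i) + 2 * (X i \<bullet> (?S i *v U i)) + U i \<bullet> (?R i *v U i)
          = joinxu (X i) (U i) \<bullet> (HessH f xs us ls (tau i) *v joinxu (X i) (U i))"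
        unfolding Qmat_def Smat_def Rmat_def by (rule quad_joinxu[symmetric]) (rule Hsym[OF tr[OF i]])
      also have "\<dots> \<ge> \<alpha> * (norm (joinxu (X i) (U i)))\<^sup>2" by (rule Hpos[OF tr[OF i]])
      finally show "\<alpha> * ((norm (X i))\<^sup>2 + (norm (U i))\<^sup>2) \<le> X i \<bullet> (?Q i *v X i) + 2 * (X i \<bullet> (?S i *v U i)) + U i \<bullet> (?R i *v U i)"
        by (simp add: norm_joinxu)
      show "0 \<le> omega i" using om[OF i] by simp
    qed
    moreover have "(\<Sum>i=1..N. omega i * (\<alpha> * ((norm (X i))\<^sup>2 + (norm (U i))\<^sup>2))) = \<alpha> * A' + \<alpha> * B"
      unfolding A'_def B_def by (simp add: sum_distrib_left sum.distrib algebra_simps)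
    moreover have "X N \<bullet> (?T *v X N) \<ge> \<alpha> * (norm (X N))\<^sup>2" by (rule Tpos)
    ultimately show ?thesis unfolding QZ_def A_def by (simp add: algebra_simps)
  qed
  have L2: "\<bar>SZ\<bar> \<le> (\<alpha> * A' + \<alpha> * B) / 4 + 4 * (Y\<^sup>2 / \<alpha>)"
  proof -
    have "\<bar>SZ\<bar> \<le> (\<Sum>i=1..N. \<bar>omega i * (y4e i \<bullet> X i + y6 i \<bullet> U i)\<bar>)"
      unfolding SZ_def by (rule sum_abs)
    also have "\<dots> \<le> (\<Sum>i=1..N. omega i * (\<alpha> / 4 * (norm (X i))\<^sup>2 + \<alpha> / 4 * (norm (U i))\<^sup>2 + 2 * (Y\<^sup>2 / \<alpha>)))"
    proof (rule sum_mono)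
      fix i assume i: "i \<in> {1..N}"
      have "\<bar>y4e i \<bullet> X i\<bar> \<le> Y * norm (X i)"
        using Cauchy_Schwarz_ineq2[of "y4e i" "X i"] Y4[OF i] by (meson mult_right_mono norm_ge_zero order_trans)
      also have "\<dots> \<le> \<alpha> / 4 * (norm (X i))\<^sup>2 + Y\<^sup>2 / \<alpha>" by (rule young[OF a])
      finally have 1: "\<bar>y4e i \<bullet> X i\<bar> \<le> \<alpha> / 4 * (norm (X i))\<^sup>2 + Y\<^sup>2 / \<alpha>" .
      have "\<bar>y6 i \<bullet> U i\<bar> \<le> Y * norm (U i)"
        using Cauchy_Schwarz_ineq2[of "y6 i" "U i"] Y6[OF i] by (meson mult_right_mono norm_ge_zero order_trans)
      also have "\<dots> \<le> \<alpha> / 4 * (norm (U i))\<^sup>2 + Y\<^sup>2 / \<alpha>" by (rule young[OF a])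
      finally have 2: "\<bar>y6 i \<bullet> U i\<bar> \<le> \<alpha> / 4 * (norm (U i))\<^sup>2 + Y\<^sup>2 / \<alpha>" .
      have "\<bar>y4e i \<bullet> X i + y6 i \<bullet> U i\<bar> \<le> \<alpha> / 4 * (norm (X i))\<^sup>2 + \<alpha> / 4 * (norm (U i))\<^sup>2 + 2 * (Y\<^sup>2 / \<alpha>)"
        using 1 2 by linarith
      then show "\<bar>omega i * (y4e i \<bullet> X i + y6 i \<bullet> U i)\<bar> \<le> omega i * (\<alpha> / 4 * (norm (X i))\<^sup>2 + \<alpha> / 4 * (norm (U i))\<^sup>2 + 2 * (Y\<^sup>2 / \<alpha>))"
        using om[OF i] by (simp add: abs_mult mult_left_mono)
    qed
    also have "\<dots> = \<alpha> / 4 * A' + \<alpha> / 4 * B + 2 * (Y\<^sup>2 / \<alpha>) * (\<Sum>i=1..N. omega i)"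
      unfolding A'_def B_def by (simp add: distrib_left sum.distrib sum_distrib_left sum_distrib_right sum_divide_distrib mult_ac)
    also have "\<dots> = (\<alpha> * A' + \<alpha> * B) / 4 + 4 * (Y\<^sup>2 / \<alpha>)" by (simp add: omsum om2 field_simps)
    finally show ?thesis .
  qed
  have KT0: "KT \<ge> 0"
    using Tup[of "axis undefined 1"] by (simp, (meson abs_ge_zero order_trans)?)
  have one: "1 \<in> {1..N}" using N by simp
  have KQ0: "KQ \<ge> 0"
    using Qup[OF tr[OF one], of "axis undefined 1"] by (simp, (meson abs_ge_zero order_trans)?)
  have XhN: "(norm (Xh j))\<^sup>2 \<le> (K1 * Y)\<^sup>2" if "j \<le> N" for j
    using Xhb[OF that] by (intro power_mono) auto
  have L3: "QH \<le> (KT + 2 * KQ) * (K1 * Y)\<^sup>2"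
  proof -
    have 1: "Xh N \<bullet> (?T *v Xh N) \<le> KT * (K1 * Y)\<^sup>2"
      using Tup[of "Xh N"] mult_left_mono[OF XhN[of N] KT0] by simp
    have "(\<Sum>i=1..N. omega i * (Xh i \<bullet> (?Q i *v Xh i))) \<le> (\<Sum>i=1..N. omega i * (KQ * (K1 * Y)\<^sup>2))"
    proof (intro sum_mono mult_left_mono)
      fix i assume i: "i \<in> {1..N}"
      show "Xh i \<bullet> (?Q i *v Xh i) \<le> KQ * (K1 * Y)\<^sup>2"
        using Qup[OF tr[OF i], of "Xh i"] mult_left_mono[OF XhN[of i] KQ0] i by simp
      show "0 \<le> omega i" using om[OF i] by simp
    qed
    also have "\<dots> = 2 * KQ * (K1 * Y)\<^sup>2" by (simp add: sum_distrib_right[symmetric] omsum om2)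
    finally show ?thesis using 1 unfolding QH_def by (simp add: algebra_simps)
  qed
  have L4: "\<bar>SH\<bar> \<le> 2 * K1 * Y\<^sup>2"
  proof -
    have "\<bar>SH\<bar> \<le> (\<Sum>i=1..N. \<bar>omega i * (y4e i \<bullet> Xh i)\<bar>)" unfolding SH_def by (rule sum_abs)
    also have "\<dots> \<le> (\<Sum>i=1..N. omega i * (Y * (K1 * Y)))"
    proof (rule sum_mono)
      fix i assume i: "i \<in> {1..N}"
      have "\<bar>y4e i \<bullet> Xh i\<bar> \<le> norm (y4e i) * norm (Xh i)" by (rule Cauchy_Schwarz_ineq2)
      also have "\<dots> \<le> Y * (K1 * Y)" using Y4[OF i] Xhb[of i] i Y0 by (intro mult_mono) auto
      finally show "\<bar>omega i * (y4e i \<bullet> Xh i)\<bar> \<le> omega i * (Y * (K1 * Y))"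
        using om[OF i] by (simp add: abs_mult mult_left_mono)
    qed
    also have "\<dots> = 2 * K1 * Y\<^sup>2" by (simp add: sum_distrib_right[symmetric] omsum om2 power2_eq_square)
    finally show ?thesis .
  qed
  have main: "QZ / 2 - SZ \<le> QH / 2 - SH" using le cZ cH X0 Xh0 by simp
  have K3Y: "K3 * Y\<^sup>2 = (KT + 2 * KQ) * (K1 * Y)\<^sup>2 / 2 + 2 * K1 * Y\<^sup>2 + 4 * (Y\<^sup>2 / \<alpha>)"
    unfolding K3_def by (simp add: power_mult_distrib algebra_simps)
  have key: "\<alpha> * A + \<alpha> * B \<le> 4 * (K3 * Y\<^sup>2)"
  proof -
    have "\<alpha> * A' \<le> \<alpha> * A" using AA' a by simp
    then show ?thesis by (rule lin_final[OF _ main L1 L2 L3 L4 K3Y])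
  qed
  have AB: "A + B \<le> 4 * K3 / \<alpha> * Y\<^sup>2"
    using key a by (simp add: field_simps)
  have sq: "sqrt Z \<le> sqrt (4 * K3 / \<alpha>) * Y" if "Z \<le> 4 * K3 / \<alpha> * Y\<^sup>2" for Z
  proof -
    have "sqrt Z \<le> sqrt (4 * K3 / \<alpha> * Y\<^sup>2)" using that by (rule real_sqrt_le_mono)
    also have "\<dots> = sqrt (4 * K3 / \<alpha>) * Y"
      using Y0 by (simp only: real_sqrt_mult real_sqrt_abs abs_of_nonneg)
    finally show ?thesis .
  qed
  have "normX_omega N omega X = sqrt A" unfolding normX_omega_def A_def A'_def ..
  moreover have "normU_omega N omega U = sqrt B" unfolding normU_omega_def B_def ..
  ultimately show ?thesis using sq[of A] sq[of B] AB A0 B0 unfolding Y_def by auto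
qed



lemma joinxu_cont:
  assumes "continuous_on S xs" "continuous_on S us"
  shows "continuous_on S (\<lambda>t. joinxu (xs t) (us t))"
  unfolding joinxu_def
proof (rule continuous_on_vec_lambda)
  fix k
  show "continuous_on S (\<lambda>t. case k of Inl i \<Rightarrow> xs t $ i | Inr j \<Rightarrow> us t $ j)"
    by (cases k) (auto intro!: continuous_intros assms)
qed

lemma entry_le_sum: "\<bar>T $ i $ j\<bar> \<le> (\<Sum>i\<in>UNIV. \<Sum>j\<in>UNIV. \<bar>(T::real^'k^'k) $ i $ j\<bar>)"
proof -
  have "\<bar>T $ i $ j\<bar> \<le> (\<Sum>j\<in>UNIV. \<bar>T $ i $ j\<bar>)" by (rule member_le_sum) auto
  also have "\<dots> \<le> (\<Sum>i\<in>UNIV. \<Sum>j\<in>UNIV. \<bar>T $ i $ j\<bar>)"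
    by (rule member_le_sum[where f = "\<lambda>i. \<Sum>j\<in>UNIV. \<bar>T $ i $ j\<bar>"]) (auto intro: sum_nonneg)
  finally show ?thesis .
qed

theorem lemma5p1:
  fixes f :: "real^'n \<Rightarrow> real^'m \<Rightarrow> real^'n"
    and C :: "real^'n \<Rightarrow> real"
    and xs :: "real \<Rightarrow> real^'n" and us :: "real \<Rightarrow> real^'m" and ls :: "real \<Rightarrow> real^'n"
    and G :: "(real^('n + 'm)) set" and GC :: "(real^'n) set"
    and \<alpha> :: real
  assumes cont: "continuous_on {-1..1} xs" "continuous_on {-1..1} us" "continuous_on {-1..1} ls"
    and smooth_f: "C2_on G (\<lambda>z. f (xpart z) (upart z))"
    and traj_in_G: "\<forall>t\<in>{-1..1}. joinxu (xs t) (us t) \<in> G"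
    and smooth_C: "C2_on GC C" and end_in_GC: "xs 1 \<in> GC"
    and A2_pos: "\<alpha> > 0"
    and A2_T: "\<forall>k. mat_eigenvalue (hess_mat C (xs 1)) k \<longrightarrow> k > \<alpha>"
    and A2_H: "\<forall>t\<in>{-1..1}. \<forall>k. mat_eigenvalue (HessH f xs us ls t) k \<longrightarrow> k > \<alpha>"
    and A3: "\<forall>t\<in>{-1..1}. mat_norm_inf (Amat f xs us t) \<le> 1/4
                       \<and> mat_norm_inf (transpose (Amat f xs us t)) \<le> 1/4"
  shows "\<exists>c::real. \<forall>N tau omega.
           N \<ge> 2 \<longrightarrow> gauss_radau N tau omega \<longrightarrow> radau_P1 N tau \<longrightarrow>
           (\<forall>y1 y2 y3 y4 y5 y6 X U.
              qp_solution f C xs us ls N tau omega y1 y2 y3 y4 y5 y6 X U \<longrightarrow>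
                normX_omega N omega X \<le> c * data_norm N y1 y2 y3 y4 y5 y6 \<and>
                normU_omega N omega U \<le> c * data_norm N y1 y2 y3 y4 y5 y6)"
proof -
  let ?T = "hess_mat C (xs 1)"
  have Tsym: "\<And>i j. ?T $ i $ j = ?T $ j $ i" by (rule hess_scalar_sym[OF smooth_C end_in_GC])
  have Tpos: "\<And>v. v \<bullet> (?T *v v) \<ge> \<alpha> * (norm v)\<^sup>2" by (rule psd_from_eig[OF Tsym A2_T])
  define KT where "KT = (\<Sum>i\<in>UNIV. \<Sum>j\<in>UNIV. \<bar>?T $ i $ j\<bar>) * (real CARD('n))\<^sup>2"
  have Tup: "\<And>v. \<bar>v \<bullet> (?T *v v)\<bar> \<le> KT * (norm v)\<^sup>2"
    unfolding KT_def by (rule quad_upper) (rule entry_le_sum)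
  define F where "F z = f (xpart z) (upart z)" for z
  obtain F1 :: "real^('n+'m) \<Rightarrow> (real^('n+'m)) \<Rightarrow>\<^sub>L (real^'n)" and F2 where oG: "open G"
    and d1: "\<And>w. w \<in> G \<Longrightarrow> (F has_derivative blinfun_apply (F1 w)) (at w)"
    and d2: "\<And>w. w \<in> G \<Longrightarrow> (F1 has_derivative blinfun_apply (F2 w)) (at w)"
    and c2: "continuous_on G F2"
    using smooth_f unfolding C2_on_def F_def[symmetric] by blast
  define z where "z t = joinxu (xs t) (us t)" for t
  have zG: "z t \<in> G" if "t \<in> {-1..1}" for t using traj_in_G that by (simp add: z_def)
  have HH: "HessH f xs us ls t = hess_mat (\<lambda>w. ls t \<bullet> F w) (z t)" for t
    by (simp add: HessH_def F_def z_def)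
  have Hsym: "\<And>t i j. t \<in> {-1..1} \<Longrightarrow> HessH f xs us ls t $ i $ j = HessH f xs us ls t $ j $ i"
    unfolding HH by (rule hess_inner_facts(2)[OF oG zG d1 d2 c2])
  have Hent: "\<And>t i j. t \<in> {-1..1} \<Longrightarrow> HessH f xs us ls t $ i $ j = ls t \<bullet> (F2 (z t) (axis i 1) (axis j 1))"
    unfolding HH by (rule hess_inner_facts(1)[OF oG zG d1 d2 c2])
  have Hpos: "\<And>t w. t \<in> {-1..1} \<Longrightarrow> w \<bullet> (HessH f xs us ls t *v w) \<ge> \<alpha> * (norm w)\<^sup>2"
    using psd_from_eig Hsym A2_H by blast
  have "compact (ls ` {-1..1})" by (rule compact_continuous_image[OF cont(3) compact_Icc])
  then obtain Lb where Lb: "\<And>t. t \<in> {-1..1} \<Longrightarrow> norm (ls t) \<le> Lb"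
    using compact_imp_bounded bounded_iff by (metis imageI)
  have "continuous_on {-1..1} z" unfolding z_def by (rule joinxu_cont[OF cont(1) cont(2)])
  then have "continuous_on {-1..1} (\<lambda>t. F2 (z t))"
    by (rule continuous_on_compose2[OF c2]) (auto intro: zG)
  then have "compact ((\<lambda>t. F2 (z t)) ` {-1..1})" by (rule compact_continuous_image[OF _ compact_Icc])
  then obtain Fb where Fb: "\<And>t. t \<in> {-1..1} \<Longrightarrow> norm (F2 (z t)) \<le> Fb"
    using compact_imp_bounded bounded_iff by (metis imageI)
  have Hb: "\<bar>HessH f xs us ls t $ i $ j\<bar> \<le> Lb * Fb" if t: "t \<in> {-1..1}" for t i j
  proof -
    have "\<bar>HessH f xs us ls t $ i $ j\<bar> \<le> norm (ls t) * norm (F2 (z t) (axis i 1) (axis j 1))"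
      unfolding Hent[OF t] by (rule Cauchy_Schwarz_ineq2)
    also have "norm (F2 (z t) (axis i 1) (axis j 1)) \<le> norm (F2 (z t) (axis i 1)) * norm (axis j 1 :: real^('n+'m))"
      by (rule norm_blinfun)
    also have "norm (F2 (z t) (axis i 1)) \<le> norm (F2 (z t)) * norm (axis i 1 :: real^('n+'m))"
      by (rule norm_blinfun)
    finally have "\<bar>HessH f xs us ls t $ i $ j\<bar> \<le> norm (ls t) * norm (F2 (z t))"
      by (simp add: mult_left_mono)
    also have "\<dots> \<le> Lb * Fb" using Lb[OF t] Fb[OF t] by (intro mult_mono) (auto intro: order_trans[OF norm_ge_zero])
    finally show ?thesis .
  qed
  define KQ where "KQ = Lb * Fb * (real CARD('n))\<^sup>2"
  have Qup: "\<And>t v. t \<in> {-1..1} \<Longrightarrow> \<bar>v \<bullet> (Qmat f xs us ls t *v v)\<bar> \<le> KQ * (norm v)\<^sup>2"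
    unfolding KQ_def by (rule quad_upper) (simp add: Qmat_def Hb)
  have A3': "\<forall>t\<in>{-1..1}. mat_norm_inf (Amat f xs us t) \<le> 1/4" using A3 by blast
  define K1 where "K1 = 1 + 5 * real CARD('n)"
  define K3 where "K3 = (KT + 2 * KQ) * K1\<^sup>2 / 2 + 2 * K1 + 4 / \<alpha>"
  show ?thesis
  proof (intro exI[of _ "sqrt (4 * K3 / \<alpha>)"] allI impI)
    fix N tau omega y1 y2 y3 y4 y5 y6 X U
    assume N: "N \<ge> (2::nat)" and gr: "gauss_radau N tau omega" and P1: "radau_P1 N tau"
      and sol: "qp_solution f C xs us ls N tau omega y1 y2 y3 y4 y5 y6 X U"
    have N1: "N \<ge> 1" using N by simp
    show "normX_omega N omega X \<le> sqrt (4 * K3 / \<alpha>) * data_norm N y1 y2 y3 y4 y5 y6 \<and>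
          normU_omega N omega U \<le> sqrt (4 * K3 / \<alpha>) * data_norm N y1 y2 y3 y4 y5 y6"
      unfolding K3_def K1_def
      by (rule main_N[OF N1 gr P1 A2_pos Tpos Tup Hpos Hsym Qup A3' sol])
  qed
qed

end
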